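(* Let $\star\in\{\boxtimes,\circ\}$, $k$ a positive integer, $G,H$ graphs of orders $n_G,n_H$, $M_G\subseteq E_G$, $M_H\subseteq E_H$, and let $u_G,u_H$ be the numbers of $M_G$-unmatched vertices of $G$ and $M_H$-unmatched vertices of $H$. If $F_{\circledast}(M_G,M_H)$ is a $k$-matching of $G\star H$, then $F_{\circledast}(M_G,M_H)\in\mathcal{W}_k(G\star H,M_G,M_H)$ and $|F_{\circledast}(M_G,M_H)|\ge|M|$ for all $M\in\mathcal{W}_k(G\star H,M_G,M_H)$. Moreover, if $M_G,M_H$ satisfy one of the conditions (M1)–(M4) below, then every maximum-cardinality element $M^*$ of $\mathcal{W}_k(G\star H,M_G,M_H)$ satisfies $|M^*|=\frac{k}{2}(n_Gn_H-u_Gu_H)$. Conditions: (M1)(a) $M_G$ perfect $k$-matching of $G$ and $M_H$ non-empty $1$-matching of $H$, or (M1)(b) $M_G$ non-empty $k$-matching of $G$ and $M_H=\emptyset$; (M2)(a) $M_G$ non-empty $1$-matching of $G$ and $M_H$ perfect $k$-matching of $H$, or (M2)(b) $M_G=\emptyset$ and $M_H$ non-empty $k$-matching of $H$; (M3) $k=1$ and $M_G,M_H$ are $1$-matchings; (M4) $M_G$ perfect $k_G$-matching and $M_H$ perfect $k_H$-matching with positive integers $k_Gk_H=k$.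
   Context: Graphs are finite, simple, undirected, with non-empty vertex set. For a positive integer $k$, a $k$-matching of $G=(V,E)$ is a set $M\subseteq E$ such that every vertex is incident to either $0$ or exactly $k$ edges of $M$; a vertex incident to no edge of $M$ is $M$-unmatched; $M$ is perfect if there are no unmatched vertices. Products on $V_G\times V_H$: in $G\boxtimes H$, $(g,h)\sim(g',h')$ iff (i) $\{g,g'\}\in E_G$, $h=h'$; or (ii) $g=g'$, $\{h,h'\}\in E_H$; or (iii) $\{g,g'\}\in E_G$ and $\{h,h'\}\in E_H$; in $G\circ H$ iff $\{g,g'\}\in E_G$ or (ii). With $U_G,U_H$ the unmatched vertex sets: $F_{\ast}(M_G,M_H)=\{\{(g,h),(g',h')\}:\{g,g'\}\in M_G,\{h,h'\}\in M_H\}$, $M^{U}_G=\{\{(u,h),(u,h')\}:u\in U_G,\{h,h'\}\in M_H\}$, $M^{U}_H=\{\{(g,u),(g',u)\}:u\in U_H,\{g,g'\}\in M_G\}$, $F_{\circledast}(M_G,M_H)=F_{\ast}(M_G,M_H)\cup M^{U}_G\cup M^{U}_H$. Projections: for an edge $e=\{(g,h),(g',h')\}$, $p_G(e)=\{g,g'\}$ if $g\ne g'$ and $p_G(e)=g$ if $g=g'$; similarly $p_H(e)$. A set $M\subseteq E_{G\star H}$ is weak-homomorphism preserving w.r.t. $M_G,M_H$ if $p_G(e)\in M_G\cup V_G$ and $p_H(e)\in M_H\cup V_H$ for all $e\in M$. $\mathcal{W}_k(G\star H,M_G,M_H)$ is the set of all $k$-matchings of $G\star H$ that are weak-homomorphism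 preserving w.r.t. $M_G,M_H$. *)

theory Defs
  imports "HOL-Library.Library"
begin

definition graph :: "'a set \<Rightarrow> 'a set set \<Rightarrow> bool" where
  "graph V E \<longleftrightarrow> finite V \<and> V \<noteq> {} \<and>
     (\<forall>e\<in>E. \<exists>x y. x \<noteq> y \<and> x \<in> V \<and> y \<in> V \<and> e = {x, y})"

definition k_matching :: "nat \<Rightarrow> 'a set \<Rightarrow> 'a set set \<Rightarrow> 'a set set \<Rightarrow> bool" where
  "k_matching k V E M \<longleftrightarrow> M \<subseteq> E \<and>
     (\<forall>v\<in>V. card {e\<in>M. v \<in> e} = 0 \<or> card {e\<in>M. v \<in> e} = k)"

definition unmatched :: "'a set \<Rightarrow> 'a set set \<Rightarrow> 'a set" where
  "unmatched V M = {v\<in>V. \<forall>e\<in>M. v \<notin> e}"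

definition perfect_k_matching :: "nat \<Rightarrow> 'a set \<Rightarrow> 'a set set \<Rightarrow> 'a set set \<Rightarrow> bool" where
  "perfect_k_matching k V E M \<longleftrightarrow> k_matching k V E M \<and> unmatched V M = {}"

definition strong_edges ::
  "'a set \<Rightarrow> 'a set set \<Rightarrow> 'b set \<Rightarrow> 'b set set \<Rightarrow> ('a \<times> 'b) set set" where
  "strong_edges VG EG VH EH =
     {{(g,h),(g',h')} | g h g' h'. g \<in> VG \<and> g' \<in> VG \<and> h \<in> VH \<and> h' \<in> VH \<and>
        (({g,g'} \<in> EG \<and> h = h') \<or> (g = g' \<and> {h,h'} \<in> EH) \<or>
         ({g,g'} \<in> EG \<and> {h,h'} \<in> EH))}"

definition lex_edges ::
  "'a set \<Rightarrow> 'a set set \<Rightarrow> 'b set \<Rightarrow> 'b set set \<Rightarrow> ('a \<times> 'b) set set" where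
  "lex_edges VG EG VH EH =
     {{(g,h),(g',h')} | g h g' h'. g \<in> VG \<and> g' \<in> VG \<and> h \<in> VH \<and> h' \<in> VH \<and>
        ({g,g'} \<in> EG \<or> (g = g' \<and> {h,h'} \<in> EH))}"

datatype product_kind = Strong | Lex

fun prod_edges :: "product_kind \<Rightarrow>
    'a set \<Rightarrow> 'a set set \<Rightarrow> 'b set \<Rightarrow> 'b set set \<Rightarrow> ('a \<times> 'b) set set" where
  "prod_edges Strong VG EG VH EH = strong_edges VG EG VH EH"
| "prod_edges Lex VG EG VH EH = lex_edges VG EG VH EH"

definition F_ast :: "'a set set \<Rightarrow> 'b set set \<Rightarrow> ('a \<times> 'b) set set" where
  "F_ast MG MH = {{(g,h),(g',h')} | g h g' h'. {g,g'} \<in> MG \<and> {h,h'} \<in> MH}"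

definition F_circ ::
  "'a set \<Rightarrow> 'a set set \<Rightarrow> 'b set \<Rightarrow> 'b set set \<Rightarrow> ('a \<times> 'b) set set" where
  "F_circ VG MG VH MH =
     F_ast MG MH
     \<union> {{(u,h),(u,h')} | u h h'. u \<in> unmatched VG MG \<and> {h,h'} \<in> MH}
     \<union> {{(g,u),(g',u)} | g g' u. u \<in> unmatched VH MH \<and> {g,g'} \<in> MG}"

definition weak_hom_preserving ::
  "'a set \<Rightarrow> 'a set set \<Rightarrow> 'b set \<Rightarrow> 'b set set \<Rightarrow> ('a \<times> 'b) set set \<Rightarrow> bool" where
  "weak_hom_preserving VG MG VH MH M \<longleftrightarrow>
     (\<forall>e\<in>M. \<forall>x y. e = {x, y} \<longrightarrow>
        (if fst x = fst y then fst x \<in> VG else {fst x, fst y} \<in> MG) \<and>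
        (if snd x = snd y then snd x \<in> VH else {snd x, snd y} \<in> MH))"

definition W_k :: "nat \<Rightarrow> product_kind \<Rightarrow>
    'a set \<Rightarrow> 'a set set \<Rightarrow> 'b set \<Rightarrow> 'b set set \<Rightarrow>
    'a set set \<Rightarrow> 'b set set \<Rightarrow> ('a \<times> 'b) set set set" where
  "W_k k star VG EG VH EH MG MH =
     {M. k_matching k (VG \<times> VH) (prod_edges star VG EG VH EH) M \<and>
         weak_hom_preserving VG MG VH MH M}"

end

theory Submission
  imports Defs
begin

definition nbr :: "'a set set \<Rightarrow> 'a \<Rightarrow> 'a set" where
  "nbr M g = {g'. {g,g'} \<in> M}"

lemma edge_form:
  assumes "graph V E" "M \<subseteq> E" "e \<in> M"
  shows "\<exists>x y. x \<noteq> y \<and> x \<in> V \<and> y \<in> V \<and> e = {x,y}"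
  using assms unfolding graph_def by blast

lemma edge_pair:
  assumes "graph V E" "M \<subseteq> E" "{a,b} \<in> M"
  shows "a \<noteq> b \<and> a \<in> V \<and> b \<in> V"
proof -
  obtain x y where "x \<noteq> y" "x \<in> V" "y \<in> V" "{a,b} = {x,y}"
    using edge_form[OF assms] by blast
  then show ?thesis by (auto simp: doubleton_eq_iff)
qed

lemma nbr_sub:
  assumes "graph V E" "M \<subseteq> E"
  shows "nbr M g \<subseteq> V" "g \<notin> nbr M g"
  using edge_pair[OF assms] unfolding nbr_def by (auto, metis insert_absorb2)

lemma nbr_finite:
  assumes "graph V E" "M \<subseteq> E"
  shows "finite (nbr M g)"
  using nbr_sub[OF assms] assms(1) unfolding graph_def by (meson finite_subset)

lemma unm_iff:
  assumes "graph V E" "M \<subseteq> E" "g \<in> V"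
  shows "g \<in> unmatched V M \<longleftrightarrow> nbr M g = {}"
proof
  assume "g \<in> unmatched V M" then show "nbr M g = {}"
    unfolding unmatched_def nbr_def by auto
next
  assume a: "nbr M g = {}"
  show "g \<in> unmatched V M"
  proof (unfold unmatched_def, safe)
    show "g \<in> V" by fact
  next
    fix e assume "e \<in> M" "g \<in> e"
    then obtain x y where "e = {x,y}" using edge_form[OF assms(1,2)] by blast
    with \<open>e \<in> M\<close> \<open>g \<in> e\<close> have "nbr M g \<noteq> {}"
      unfolding nbr_def by (auto simp: insert_commute)
    with a show False by simp
  qed
qed

lemma card_nbr:
  assumes "graph V E" "M \<subseteq> E"
  shows "card (nbr M g) = card {e\<in>M. g \<in> e}"
proof -
  have "bij_betw (\<lambda>g'. {g,g'}) (nbr M g) {e\<in>M. g \<in> e}"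
  proof (rule bij_betwI')
    fix a b assume "a \<in> nbr M g" "b \<in> nbr M g"
    show "({g, a} = {g, b}) = (a = b)" by (auto simp: doubleton_eq_iff)
  next
    fix a assume "a \<in> nbr M g" then show "{g,a} \<in> {e\<in>M. g \<in> e}"
      unfolding nbr_def by auto
  next
    fix e assume "e \<in> {e\<in>M. g \<in> e}"
    then obtain x y where "e = {x,y}" "e \<in> M" "g \<in> e" using edge_form[OF assms] by blast
    then show "\<exists>a\<in>nbr M g. e = {g, a}"
      unfolding nbr_def by (auto simp: insert_commute)
  qed
  then show ?thesis by (rule bij_betw_same_card)
qed

lemma double_count:
  assumes "finite V" "\<And>e. e \<in> M \<Longrightarrow> e \<subseteq> V \<and> card e = 2"
    "\<And>v. v \<in> V \<Longrightarrow> card {e\<in>M. v \<in> e} = 0 \<or> card {e\<in>M. v \<in> e} = k"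
  shows "2 * card M = k * card {v\<in>V. \<exists>e\<in>M. v \<in> e}"
proof -
  have fM: "finite M"
    by (rule finite_subset[of M "Pow V"]) (use assms in auto)
  have c: "card {e\<in>M. v \<in> e} = (\<Sum>e\<in>M. if v \<in> e then 1 else 0)" for v
    using fM by (simp add: sum.inter_filter[symmetric])
  have "(\<Sum>v\<in>V. card {e\<in>M. v \<in> e}) = (\<Sum>v\<in>V. \<Sum>e\<in>M. if v \<in> e then 1 else 0)"
    by (simp add: c)
  also have "\<dots> = (\<Sum>e\<in>M. \<Sum>v\<in>V. if v \<in> e then 1 else 0)"
    by (rule sum.swap)
  also have "\<dots> = (\<Sum>e\<in>M. card {v\<in>V. v \<in> e})"
    using assms(1) by (simp add: sum.inter_filter[symmetric])
  also have "\<dots> = (\<Sum>e\<in>M. 2)"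
  proof (rule sum.cong)
    fix e assume "e \<in> M"
    then have "{v\<in>V. v \<in> e} = e" "card e = 2" using assms(2) by auto
    then show "card {v\<in>V. v \<in> e} = 2" by simp
  qed simp
  finally have s1: "(\<Sum>v\<in>V. card {e\<in>M. v \<in> e}) = 2 * card M" by simp
  have "(\<Sum>v\<in>V. card {e\<in>M. v \<in> e}) = (\<Sum>v\<in>V. if (\<exists>e\<in>M. v \<in> e) then k else 0)"
  proof (rule sum.cong)
    fix v assume v: "v \<in> V"
    show "card {e\<in>M. v \<in> e} = (if (\<exists>e\<in>M. v \<in> e) then k else 0)"
    proof (cases "\<exists>e\<in>M. v \<in> e")
      case True
      then have "{e\<in>M. v \<in> e} \<noteq> {}" by auto
      then have "card {e\<in>M. v \<in> e} \<noteq> 0" using fM by simp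
      then show ?thesis using assms(3)[OF v] True by auto
    next
      case False
      then have "{e\<in>M. v \<in> e} = {}" by auto
      then show ?thesis using False by (metis (no_types, lifting) card.empty)
    qed
  qed simp
  also have "\<dots> = k * card {v\<in>V. \<exists>e\<in>M. v \<in> e}"
    using assms(1) by (simp add: sum.inter_filter[symmetric])
  finally show ?thesis using s1 by simp
qed


definition aa :: "'a set set \<Rightarrow> 'a \<Rightarrow> 'a set" where
  "aa M g = (if nbr M g = {} then {g} else nbr M g)"

lemma F_nbr:
  assumes G: "graph VG EG" and H: "graph VH EH" and MG: "MG \<subseteq> EG" and MH: "MH \<subseteq> EH"
    and g: "g \<in> VG" and h: "h \<in> VH"
  shows "{e\<in>F_circ VG MG VH MH. (g,h) \<in> e} = (\<lambda>w. {(g,h),w}) ` (aa MG g \<times> aa MH h - {(g,h)})"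
proof (rule set_eqI, rule iffI)
  fix e assume "e \<in> {e\<in>F_circ VG MG VH MH. (g,h) \<in> e}"
  then have eF: "e \<in> F_circ VG MG VH MH" and ge: "(g,h) \<in> e" by auto
  from eF consider
      (a) g1 h1 g2 h2 where "e = {(g1,h1),(g2,h2)}" "{g1,g2} \<in> MG" "{h1,h2} \<in> MH"
    | (b) u h1 h2 where "e = {(u,h1),(u,h2)}" "u \<in> unmatched VG MG" "{h1,h2} \<in> MH"
    | (c) g1 g2 u where "e = {(g1,u),(g2,u)}" "u \<in> unmatched VH MH" "{g1,g2} \<in> MG"
    unfolding F_circ_def F_ast_def by blast
  then show "e \<in> (\<lambda>w. {(g,h),w}) ` (aa MG g \<times> aa MH h - {(g,h)})"
  proof cases
    case a
    have d1: "g1 \<noteq> g2" using edge_pair[OF G MG a(2)] by simp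
    have "(g,h) = (g1,h1) \<or> (g,h) = (g2,h2)" using ge a(1) by auto
    then show ?thesis
    proof
      assume eq: "(g,h) = (g1,h1)"
      have "g2 \<in> nbr MG g" "h2 \<in> nbr MH h" using a eq unfolding nbr_def by auto
      then have "(g2,h2) \<in> aa MG g \<times> aa MH h - {(g,h)}"
        using d1 eq unfolding aa_def by auto
      then show ?thesis using a(1) eq by blast
    next
      assume eq: "(g,h) = (g2,h2)"
      have "g1 \<in> nbr MG g" "h1 \<in> nbr MH h" using a eq unfolding nbr_def by (auto simp: insert_commute)
      then have "(g1,h1) \<in> aa MG g \<times> aa MH h - {(g,h)}"
        using d1 eq unfolding aa_def by auto
      moreover have "e = {(g,h),(g1,h1)}" using a(1) eq by auto
      ultimately show ?thesis by blast
    qed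
  next
    case b
    have d1: "h1 \<noteq> h2" using edge_pair[OF H MH b(3)] by simp
    have gu: "g = u" using ge b(1) by auto
    then have ng: "nbr MG g = {}" using unm_iff[OF G MG g] b(2) by simp
    have "h = h1 \<or> h = h2" using ge b(1) by auto
    then show ?thesis
    proof
      assume eq: "h = h1"
      have "h2 \<in> nbr MH h" using b eq unfolding nbr_def by auto
      then have "(u,h2) \<in> aa MG g \<times> aa MH h - {(g,h)}"
        using d1 eq gu ng unfolding aa_def by auto
      then show ?thesis using b(1) eq gu by blast
    next
      assume eq: "h = h2"
      have "h1 \<in> nbr MH h" using b eq unfolding nbr_def by (auto simp: insert_commute)
      then have "(u,h1) \<in> aa MG g \<times> aa MH h - {(g,h)}"
        using d1 eq gu ng unfolding aa_def by auto
      moreover have "e = {(g,h),(u,h1)}" using b(1) eq gu by auto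
      ultimately show ?thesis by blast
    qed
  next
    case c
    have d1: "g1 \<noteq> g2" using edge_pair[OF G MG c(3)] by simp
    have hu: "h = u" using ge c(1) by auto
    then have nh: "nbr MH h = {}" using unm_iff[OF H MH h] c(2) by simp
    have "g = g1 \<or> g = g2" using ge c(1) by auto
    then show ?thesis
    proof
      assume eq: "g = g1"
      have "g2 \<in> nbr MG g" using c eq unfolding nbr_def by auto
      then have "(g2,u) \<in> aa MG g \<times> aa MH h - {(g,h)}"
        using d1 eq hu nh unfolding aa_def by auto
      then show ?thesis using c(1) eq hu by blast
    next
      assume eq: "g = g2"
      have "g1 \<in> nbr MG g" using c eq unfolding nbr_def by (auto simp: insert_commute)
      then have "(g1,u) \<in> aa MG g \<times> aa MH h - {(g,h)}"
        using d1 eq hu nh unfolding aa_def by auto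
      moreover have "e = {(g,h),(g1,u)}" using c(1) eq hu by auto
      ultimately show ?thesis by blast
    qed
  qed
next
  fix e assume "e \<in> (\<lambda>w. {(g,h),w}) ` (aa MG g \<times> aa MH h - {(g,h)})"
  then obtain g' h' where e: "e = {(g,h),(g',h')}" and w: "(g',h') \<in> aa MG g \<times> aa MH h"
    and ne: "(g',h') \<noteq> (g,h)" by auto
  have "e \<in> F_circ VG MG VH MH"
  proof (cases "nbr MG g = {}"; cases "nbr MH h = {}")
    assume "nbr MG g = {}" "nbr MH h = {}"
    then show ?thesis using w ne unfolding aa_def by auto
  next
    assume n1: "nbr MG g = {}" and n2: "nbr MH h \<noteq> {}"
    then have "aa MG g = {g}" "aa MH h = nbr MH h" by (simp_all add: aa_def)
    then have "g' = g" "{h,h'} \<in> MH" using w unfolding nbr_def by auto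
    moreover have "g \<in> unmatched VG MG" using unm_iff[OF G MG g] n1 by simp
    ultimately show ?thesis unfolding F_circ_def e by blast
  next
    assume n1: "nbr MG g \<noteq> {}" and n2: "nbr MH h = {}"
    then have "aa MG g = nbr MG g" "aa MH h = {h}" by (simp_all add: aa_def)
    then have "h' = h" "{g,g'} \<in> MG" using w unfolding nbr_def by auto
    moreover have "h \<in> unmatched VH MH" using unm_iff[OF H MH h] n2 by simp
    ultimately show ?thesis unfolding F_circ_def e by blast
  next
    assume n1: "nbr MG g \<noteq> {}" and n2: "nbr MH h \<noteq> {}"
    then have "aa MG g = nbr MG g" "aa MH h = nbr MH h" by (simp_all add: aa_def)
    then have "{h,h'} \<in> MH" "{g,g'} \<in> MG" using w unfolding nbr_def by auto
    then show ?thesis unfolding F_circ_def F_ast_def e by blast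
  qed
  then show "e \<in> {e\<in>F_circ VG MG VH MH. (g,h) \<in> e}" using e by auto
qed

lemma F_deg:
  assumes G: "graph VG EG" and H: "graph VH EH" and MG: "MG \<subseteq> EG" and MH: "MH \<subseteq> EH"
    and g: "g \<in> VG" and h: "h \<in> VH"
  shows "card {e\<in>F_circ VG MG VH MH. (g,h) \<in> e} =
     card (aa MG g) * card (aa MH h) - (if nbr MG g = {} \<and> nbr MH h = {} then 1 else 0)"
proof -
  have inj: "inj_on (\<lambda>w. {(g,h),w}) X" for X :: "('a \<times> 'b) set"
    by (rule inj_onI) (auto simp: doubleton_eq_iff)
  have fin: "finite (aa MG g)" "finite (aa MH h)"
    using nbr_finite[OF G MG] nbr_finite[OF H MH] unfolding aa_def by auto
  have mem: "(g,h) \<in> aa MG g \<times> aa MH h \<longleftrightarrow> nbr MG g = {} \<and> nbr MH h = {}"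
    using nbr_sub(2)[OF G MG, of g] nbr_sub(2)[OF H MH, of h] unfolding aa_def by auto
  show ?thesis
    unfolding F_nbr[OF assms] card_image[OF inj]
    using fin mem by (simp add: card_Diff_singleton_if card_cartesian_product)
qed


lemma prod_edge_form:
  assumes G: "graph VG EG" and H: "graph VH EH" and e: "e \<in> prod_edges star VG EG VH EH"
  shows "e \<subseteq> VG \<times> VH \<and> card e = 2"
proof -
  have dG: "g \<noteq> g'" if "{g,g'} \<in> EG" for g g'
    using edge_pair[OF G order_refl that] by simp
  have dH: "h \<noteq> h'" if "{h,h'} \<in> EH" for h h'
    using edge_pair[OF H order_refl that] by simp
  obtain g h g' h' where "e = {(g,h),(g',h')}" "g \<in> VG" "g' \<in> VG" "h \<in> VH" "h' \<in> VH"
    "(g,h) \<noteq> (g',h')"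
    using e dG dH by (cases star) (auto simp: strong_edges_def lex_edges_def)
  then show ?thesis by auto
qed

lemma F_sub_prod:
  assumes G: "graph VG EG" and H: "graph VH EH" and MG: "MG \<subseteq> EG" and MH: "MH \<subseteq> EH"
  shows "F_circ VG MG VH MH \<subseteq> prod_edges star VG EG VH EH"
proof
  fix e assume "e \<in> F_circ VG MG VH MH"
  then consider
      (a) g1 h1 g2 h2 where "e = {(g1,h1),(g2,h2)}" "{g1,g2} \<in> MG" "{h1,h2} \<in> MH"
    | (b) u h1 h2 where "e = {(u,h1),(u,h2)}" "u \<in> unmatched VG MG" "{h1,h2} \<in> MH"
    | (c) g1 g2 u where "e = {(g1,u),(g2,u)}" "u \<in> unmatched VH MH" "{g1,g2} \<in> MG"
    unfolding F_circ_def F_ast_def by blast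
  then show "e \<in> prod_edges star VG EG VH EH"
  proof cases
    case a
    have "g1 \<in> VG" "g2 \<in> VG" using edge_pair[OF G MG a(2)] by auto
    moreover have "h1 \<in> VH" "h2 \<in> VH" using edge_pair[OF H MH a(3)] by auto
    moreover have "{g1,g2} \<in> EG" "{h1,h2} \<in> EH" using a MG MH by auto
    ultimately show ?thesis using a(1)
      by (cases star) (simp_all add: strong_edges_def lex_edges_def; blast)+
  next
    case b
    have "u \<in> VG" using b(2) unfolding unmatched_def by auto
    moreover have "h1 \<in> VH" "h2 \<in> VH" using edge_pair[OF H MH b(3)] by auto
    moreover have "{h1,h2} \<in> EH" using b MH by auto
    ultimately show ?thesis using b(1)
      by (cases star) (simp_all add: strong_edges_def lex_edges_def; blast)+
  next
    case c
    have "u \<in> VH" using c(2) unfolding unmatched_def by auto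
    moreover have "g1 \<in> VG" "g2 \<in> VG" using edge_pair[OF G MG c(3)] by auto
    moreover have "{g1,g2} \<in> EG" using c MG by auto
    ultimately show ?thesis using c(1)
      by (cases star) (simp_all add: strong_edges_def lex_edges_def; blast)+
  qed
qed

lemma F_weak:
  assumes G: "graph VG EG" and H: "graph VH EH" and MG: "MG \<subseteq> EG" and MH: "MH \<subseteq> EH"
  shows "weak_hom_preserving VG MG VH MH (F_circ VG MG VH MH)"
  unfolding weak_hom_preserving_def
proof (intro ballI allI impI)
  fix e x y assume eF: "e \<in> F_circ VG MG VH MH" and exy: "e = {x,y}"
  from eF consider
      (a) g1 h1 g2 h2 where "e = {(g1,h1),(g2,h2)}" "{g1,g2} \<in> MG" "{h1,h2} \<in> MH"
    | (b) u h1 h2 where "e = {(u,h1),(u,h2)}" "u \<in> unmatched VG MG" "{h1,h2} \<in> MH"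
    | (c) g1 g2 u where "e = {(g1,u),(g2,u)}" "u \<in> unmatched VH MH" "{g1,g2} \<in> MG"
    unfolding F_circ_def F_ast_def by blast
  then show "(if fst x = fst y then fst x \<in> VG else {fst x, fst y} \<in> MG) \<and>
        (if snd x = snd y then snd x \<in> VH else {snd x, snd y} \<in> MH)"
  proof cases
    case a
    have "g1 \<noteq> g2" using edge_pair[OF G MG a(2)] by auto
    moreover have "h1 \<noteq> h2" using edge_pair[OF H MH a(3)] by auto
    moreover have "(x = (g1,h1) \<and> y = (g2,h2)) \<or> (x = (g2,h2) \<and> y = (g1,h1))"
      using a(1) exy by (auto simp: doubleton_eq_iff)
    ultimately show ?thesis using a by (auto simp: insert_commute)
  next
    case b
    have "u \<in> VG" using b(2) unfolding unmatched_def by auto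
    moreover have "h1 \<noteq> h2" using edge_pair[OF H MH b(3)] by auto
    moreover have "(x = (u,h1) \<and> y = (u,h2)) \<or> (x = (u,h2) \<and> y = (u,h1))"
      using b(1) exy by (auto simp: doubleton_eq_iff)
    ultimately show ?thesis using b by (auto simp: insert_commute)
  next
    case c
    have "u \<in> VH" using c(2) unfolding unmatched_def by auto
    moreover have "g1 \<noteq> g2" using edge_pair[OF G MG c(3)] by auto
    moreover have "(x = (g1,u) \<and> y = (g2,u)) \<or> (x = (g2,u) \<and> y = (g1,u))"
      using c(1) exy by (auto simp: doubleton_eq_iff)
    ultimately show ?thesis using c by (auto simp: insert_commute)
  qed
qed

lemma matched_W:
  assumes G: "graph VG EG" and H: "graph VH EH"
    and M: "M \<in> W_k k star VG EG VH EH MG MH"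
  shows "{v\<in>VG \<times> VH. \<exists>e\<in>M. v \<in> e} \<subseteq> VG \<times> VH - unmatched VG MG \<times> unmatched VH MH"
proof (safe)
  fix g h e assume e: "e \<in> M" "(g,h) \<in> e" and gu: "g \<in> unmatched VG MG" and hu: "h \<in> unmatched VH MH"
  have eP: "e \<in> prod_edges star VG EG VH EH" and wh: "weak_hom_preserving VG MG VH MH M"
    using M e unfolding W_k_def k_matching_def by auto
  have "e \<subseteq> VG \<times> VH \<and> card e = 2" by (rule prod_edge_form[OF G H eP])
  then obtain x y where "x \<noteq> y" "e = {x,y}" by (meson card_2_iff)
  then have "\<exists>w. e = {(g,h), w} \<and> w \<noteq> (g,h)" using e(2)
    by (metis insert_commute insertE singletonD)
  then obtain w where ew: "e = {(g,h), w}" "w \<noteq> (g,h)" by blast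
  have c: "(if fst (g,h) = fst w then fst (g,h) \<in> VG else {fst (g,h), fst w} \<in> MG) \<and>
        (if snd (g,h) = snd w then snd (g,h) \<in> VH else {snd (g,h), snd w} \<in> MH)"
    using wh e(1) ew(1) unfolding weak_hom_preserving_def by blast
  have "fst w = g"
  proof (rule ccontr)
    assume "fst w \<noteq> g"
    then have "{g, fst w} \<in> MG" using c by auto
    then show False using gu unfolding unmatched_def by auto
  qed
  moreover have "snd w = h"
  proof (rule ccontr)
    assume "snd w \<noteq> h"
    then have "{h, snd w} \<in> MH" using c by auto
    then show False using hu unfolding unmatched_def by auto
  qed
  ultimately show False using ew(2) by (cases w) auto
qed

lemma matched_F:
  assumes G: "graph VG EG" and H: "graph VH EH" and MG: "MG \<subseteq> EG" and MH: "MH \<subseteq> EH"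
  shows "{v\<in>VG \<times> VH. \<exists>e\<in>F_circ VG MG VH MH. v \<in> e} = VG \<times> VH - unmatched VG MG \<times> unmatched VH MH"
proof (rule set_eqI)
  fix v show "v \<in> {v\<in>VG \<times> VH. \<exists>e\<in>F_circ VG MG VH MH. v \<in> e} \<longleftrightarrow>
     v \<in> VG \<times> VH - unmatched VG MG \<times> unmatched VH MH"
  proof (cases "v \<in> VG \<times> VH")
    case False then show ?thesis by auto
  next
    case True
    then obtain g h where v: "v = (g,h)" "g \<in> VG" "h \<in> VH" by auto
    have "(\<exists>e\<in>F_circ VG MG VH MH. v \<in> e) \<longleftrightarrow> {e\<in>F_circ VG MG VH MH. (g,h) \<in> e} \<noteq> {}"
      using v by auto
    also have "\<dots> \<longleftrightarrow> aa MG g \<times> aa MH h - {(g,h)} \<noteq> {}"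
      unfolding F_nbr[OF G H MG MH v(2,3)] by simp
    also have "\<dots> \<longleftrightarrow> \<not> (nbr MG g = {} \<and> nbr MH h = {})"
    proof -
      have "g \<notin> nbr MG g" "h \<notin> nbr MH h" using nbr_sub(2)[OF G MG] nbr_sub(2)[OF H MH] by auto
      then show ?thesis unfolding aa_def by auto
    qed
    also have "\<dots> \<longleftrightarrow> v \<notin> unmatched VG MG \<times> unmatched VH MH"
      using unm_iff[OF G MG v(2)] unm_iff[OF H MH v(3)] v(1) by auto
    finally show ?thesis using True by auto
  qed
qed


lemma nbr_km:
  assumes G: "graph V E" and "k_matching k' V E M" "g \<in> V"
  shows "card (nbr M g) = 0 \<or> card (nbr M g) = k'"
  using assms card_nbr[OF G, of M g] unfolding k_matching_def by auto

lemma nbr_perf: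
  assumes G: "graph V E" and "perfect_k_matching k' V E M" "g \<in> V"
  shows "nbr M g \<noteq> {}"
  using assms unm_iff[OF G, of M g] unfolding perfect_k_matching_def k_matching_def by auto

lemma nbr_card0:
  assumes G: "graph V E" and "M \<subseteq> E"
  shows "card (nbr M g) = 0 \<longleftrightarrow> nbr M g = {}"
  using nbr_finite[OF assms] by simp

lemma part1:
  assumes G: "graph VG EG" and H: "graph VH EH" and MG: "MG \<subseteq> EG" and MH: "MH \<subseteq> EH"
    and Fk: "k_matching k (VG \<times> VH) (prod_edges star VG EG VH EH) (F_circ VG MG VH MH)"
  shows "F_circ VG MG VH MH \<in> W_k k star VG EG VH EH MG MH"
    "\<forall>M \<in> W_k k star VG EG VH EH MG MH. card M \<le> card (F_circ VG MG VH MH)"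
    "2 * card (F_circ VG MG VH MH) = k * (card VG * card VH - card (unmatched VG MG) * card (unmatched VH MH))"
proof -
  let ?F = "F_circ VG MG VH MH"
  let ?U = "unmatched VG MG \<times> unmatched VH MH"
  have fV: "finite (VG \<times> VH)" using G H unfolding graph_def by auto
  have dc: "2 * card M = k * card {v\<in>VG \<times> VH. \<exists>e\<in>M. v \<in> e}"
    if "k_matching k (VG \<times> VH) (prod_edges star VG EG VH EH) M" for M
    using that by (intro double_count[OF fV]) (auto simp: k_matching_def dest: prod_edge_form[OF G H])
  show FW: "?F \<in> W_k k star VG EG VH EH MG MH"
    unfolding W_k_def using Fk F_weak[OF G H MG MH] by auto
  have UV: "?U \<subseteq> VG \<times> VH" unfolding unmatched_def by auto
  have cU: "card (VG \<times> VH - ?U) = card VG * card VH - card (unmatched VG MG) * card (unmatched VH MH)"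
    using UV fV by (simp add: card_Diff_subset finite_subset card_cartesian_product)
  have cF: "2 * card ?F = k * card (VG \<times> VH - ?U)"
    using dc[OF Fk] matched_F[OF G H MG MH] by simp
  then show "2 * card ?F = k * (card VG * card VH - card (unmatched VG MG) * card (unmatched VH MH))"
    using cU by simp
  show "\<forall>M \<in> W_k k star VG EG VH EH MG MH. card M \<le> card ?F"
  proof
    fix M assume M: "M \<in> W_k k star VG EG VH EH MG MH"
    then have "2 * card M = k * card {v\<in>VG \<times> VH. \<exists>e\<in>M. v \<in> e}"
      using dc unfolding W_k_def by auto
    also have "\<dots> \<le> k * card (VG \<times> VH - ?U)"
      using matched_W[OF G H M] fV by (intro mult_le_mono2 card_mono) auto
    finally show "card M \<le> card ?F" using cF by simp
  qed
qed

lemma F_kmatch: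
  assumes G: "graph VG EG" and H: "graph VH EH" and MG: "MG \<subseteq> EG" and MH: "MH \<subseteq> EH"
    and cond: "(perfect_k_matching k VG EG MG \<and> k_matching 1 VH EH MH \<and> MH \<noteq> {})
       \<or> (k_matching k VG EG MG \<and> MG \<noteq> {} \<and> MH = {})
       \<or> (k_matching 1 VG EG MG \<and> MG \<noteq> {} \<and> perfect_k_matching k VH EH MH)
       \<or> (MG = {} \<and> k_matching k VH EH MH \<and> MH \<noteq> {})
       \<or> (k = 1 \<and> k_matching 1 VG EG MG \<and> k_matching 1 VH EH MH)
       \<or> (\<exists>kG kH. kG > 0 \<and> kH > 0 \<and> kG * kH = k \<and>
             perfect_k_matching kG VG EG MG \<and> perfect_k_matching kH VH EH MH)"
  shows "k_matching k (VG \<times> VH) (prod_edges star VG EG VH EH) (F_circ VG MG VH MH)"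
  unfolding k_matching_def
proof (intro conjI F_sub_prod[OF G H MG MH] ballI)
  fix v assume "v \<in> VG \<times> VH"
  then obtain g h where v: "v = (g,h)" "g \<in> VG" "h \<in> VH" by auto
  define A where "A = nbr MG g"
  define B where "B = nbr MH h"
  have deg: "card {e\<in>F_circ VG MG VH MH. v \<in> e} =
     (if A = {} then 1 else card A) * (if B = {} then 1 else card B) - (if A = {} \<and> B = {} then 1 else 0)"
    unfolding v(1) F_deg[OF G H MG MH v(2,3)] A_def B_def aa_def by simp
  have A0: "card A = 0 \<longleftrightarrow> A = {}" unfolding A_def by (rule nbr_card0[OF G MG])
  have B0: "card B = 0 \<longleftrightarrow> B = {}" unfolding B_def by (rule nbr_card0[OF H MH])
  have AE: "MG = {} \<Longrightarrow> A = {}" unfolding A_def nbr_def by auto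
  have BE: "MH = {} \<Longrightarrow> B = {}" unfolding B_def nbr_def by auto
  have Ak: "k_matching k' VG EG MG \<Longrightarrow> card A = 0 \<or> card A = k'" for k'
    unfolding A_def using nbr_km[OF G _ v(2)] by blast
  have Bk: "k_matching k' VH EH MH \<Longrightarrow> card B = 0 \<or> card B = k'" for k'
    unfolding B_def using nbr_km[OF H _ v(3)] by blast
  have Ap: "perfect_k_matching k' VG EG MG \<Longrightarrow> A \<noteq> {} \<and> card A = k'" for k'
    unfolding A_def using nbr_perf[OF G _ v(2)] nbr_km[OF G _ v(2)] nbr_card0[OF G MG]
    unfolding perfect_k_matching_def by metis
  have Bp: "perfect_k_matching k' VH EH MH \<Longrightarrow> B \<noteq> {} \<and> card B = k'" for k'
    unfolding B_def using nbr_perf[OF H _ v(3)] nbr_km[OF H _ v(3)] nbr_card0[OF H MH]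
    unfolding perfect_k_matching_def by metis
  show "card {e\<in>F_circ VG MG VH MH. v \<in> e} = 0 \<or> card {e\<in>F_circ VG MG VH MH. v \<in> e} = k"
    using cond
  proof (elim disjE conjE exE)
    assume "perfect_k_matching k VG EG MG" "k_matching 1 VH EH MH"
    then show ?thesis unfolding deg using Ap[of k] Bk[of 1] B0 by auto
  next
    assume "k_matching k VG EG MG" "MH = {}"
    then show ?thesis unfolding deg using Ak[of k] BE A0 by auto
  next
    assume "k_matching 1 VG EG MG" "perfect_k_matching k VH EH MH"
    then show ?thesis unfolding deg using Bp[of k] Ak[of 1] A0 by auto
  next
    assume "MG = {}" "k_matching k VH EH MH"
    then show ?thesis unfolding deg using Bk[of k] AE B0 by auto
  next
    assume "k = 1" "k_matching 1 VG EG MG" "k_matching 1 VH EH MH"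
    then show ?thesis unfolding deg using Ak[of 1] Bk[of 1] A0 B0 by auto
  next
    fix kG kH assume "kG * kH = k" "perfect_k_matching kG VG EG MG" "perfect_k_matching kH VH EH MH"
    then show ?thesis unfolding deg using Ap[of kG] Bp[of kH] by auto
  qed
qed

theorem mainTheorem15:
  fixes star :: product_kind and k :: nat
    and VG :: "'a set" and EG MG :: "'a set set"
    and VH :: "'b set" and EH MH :: "'b set set"
  assumes "k > 0"
    and "graph VG EG" and "graph VH EH"
    and "MG \<subseteq> EG" and "MH \<subseteq> EH"
  shows
    "(k_matching k (VG \<times> VH) (prod_edges star VG EG VH EH) (F_circ VG MG VH MH) \<longrightarrow>
        F_circ VG MG VH MH \<in> W_k k star VG EG VH EH MG MH \<and>
        (\<forall>M \<in> W_k k star VG EG VH EH MG MH. card (F_circ VG MG VH MH) \<ge> card M))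
     \<and>
     ((  (perfect_k_matching k VG EG MG \<and> k_matching 1 VH EH MH \<and> MH \<noteq> {})
       \<or> (k_matching k VG EG MG \<and> MG \<noteq> {} \<and> MH = {})
       \<or> (k_matching 1 VG EG MG \<and> MG \<noteq> {} \<and> perfect_k_matching k VH EH MH)
       \<or> (MG = {} \<and> k_matching k VH EH MH \<and> MH \<noteq> {})
       \<or> (k = 1 \<and> k_matching 1 VG EG MG \<and> k_matching 1 VH EH MH)
       \<or> (\<exists>kG kH. kG > 0 \<and> kH > 0 \<and> kG * kH = k \<and>
             perfect_k_matching kG VG EG MG \<and> perfect_k_matching kH VH EH MH))
      \<longrightarrow> (\<forall>Mstar \<in> W_k k star VG EG VH EH MG MH.
             (\<forall>M \<in> W_k k star VG EG VH EH MG MH. card M \<le> card Mstar) \<longrightarrow>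
             real (card Mstar) = real k / 2 *
               (real (card VG) * real (card VH)
                - real (card (unmatched VG MG)) * real (card (unmatched VH MH)))))"
proof (intro conjI impI ballI)
  assume Fk: "k_matching k (VG \<times> VH) (prod_edges star VG EG VH EH) (F_circ VG MG VH MH)"
  show "F_circ VG MG VH MH \<in> W_k k star VG EG VH EH MG MH"
    using part1(1)[OF assms(2-5) Fk] .
  fix M assume "M \<in> W_k k star VG EG VH EH MG MH"
  then show "card M \<le> card (F_circ VG MG VH MH)"
    using part1(2)[OF assms(2-5) Fk] by blast
next
  fix Mstar
  assume cond: "(perfect_k_matching k VG EG MG \<and> k_matching 1 VH EH MH \<and> MH \<noteq> {})
       \<or> (k_matching k VG EG MG \<and> MG \<noteq> {} \<and> MH = {})
       \<or> (k_matching 1 VG EG MG \<and> MG \<noteq> {} \<and> perfect_k_matching k VH EH MH)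
       \<or> (MG = {} \<and> k_matching k VH EH MH \<and> MH \<noteq> {})
       \<or> (k = 1 \<and> k_matching 1 VG EG MG \<and> k_matching 1 VH EH MH)
       \<or> (\<exists>kG kH. kG > 0 \<and> kH > 0 \<and> kG * kH = k \<and>
             perfect_k_matching kG VG EG MG \<and> perfect_k_matching kH VH EH MH)"
    and Ms: "Mstar \<in> W_k k star VG EG VH EH MG MH"
    and mx: "\<forall>M \<in> W_k k star VG EG VH EH MG MH. card M \<le> card Mstar"
  have Fk: "k_matching k (VG \<times> VH) (prod_edges star VG EG VH EH) (F_circ VG MG VH MH)"
    by (rule F_kmatch[OF assms(2-5) cond])
  note P = part1[OF assms(2-5) Fk]
  have "card Mstar = card (F_circ VG MG VH MH)"
    using P(1,2) mx Ms by (meson le_antisym)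
  then have e: "2 * card Mstar = k * (card VG * card VH - card (unmatched VG MG) * card (unmatched VH MH))"
    using P(3) by simp
  have le: "card (unmatched VG MG) * card (unmatched VH MH) \<le> card VG * card VH"
  proof (intro mult_le_mono card_mono)
    show "finite VG" "finite VH" using assms(2,3) unfolding graph_def by auto
  qed (auto simp: unmatched_def)
  have "real (2 * card Mstar) = real k * (real (card VG) * real (card VH)
                - real (card (unmatched VG MG)) * real (card (unmatched VH MH)))"
    unfolding e using le by (simp add: of_nat_diff)
  then show "real (card Mstar) = real k / 2 *
               (real (card VG) * real (card VH)
                - real (card (unmatched VG MG)) * real (card (unmatched VH MH)))"
    by simp
qed

end
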